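(* For every $j\in\mathbb{N}$ there exists an (effectively computable) integer $n_\Delta(j)$ such that for all integers $n\ge n_\Delta(j)$, \[ \Delta^{[2]}_j(u)(n):=u(n)-2u(n-j)+u(n-2j)>0. \]
   Context: $u(n)$ denotes the number of unimodal sequences of size $n$, i.e. the number of sequences of positive integers $a_1\le\dots\le a_r\le c\ge b_s\ge\dots\ge b_1$ ($r,s\ge0$) summing to $n$; equivalently $\sum_{n\ge0}u(n)q^n=\sum_{n\ge0}\frac{q^n}{(q;q)_n^2}$ with $(a;q)_n=\prod_{j=0}^{n-1}(1-aq^j)$. *)

theory Defs
  imports Main
begin

text \<open>A unimodal sequence a_1 <= ... <= a_r <= c >= b_s >= ... >= b_1 of size n is
  encoded as a triple (as, c, bs): the left part as (nondecreasing list), the peak c and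
  the right part bs (stored as a nondecreasing list b_1 <= ... <= b_s).  The peak c = 0 is only possible for the empty sequence
  (n = 0), matching the n = 0 term of the generating function sum q^n/(q;q)_n^2.\<close>

definition unimodal_seqs :: "nat \<Rightarrow> (nat list \<times> nat \<times> nat list) set" where
  "unimodal_seqs n = {(as, c, bs). sorted as \<and> sorted bs \<and>
      (\<forall>x\<in>set as. 0 < x \<and> x \<le> c) \<and> (\<forall>x\<in>set bs. 0 < x \<and> x \<le> c) \<and>
      sum_list as + c + sum_list bs = n}"

definition u :: "nat \<Rightarrow> nat" where
  "u n = card (unimodal_seqs n)"

end

theory Submission
  imports Defs
begin

lemma len_le_sum: "\<forall>x\<in>set (xs::nat list). 0 < x \<Longrightarrow> length xs \<le> sum_list xs"
  by (induction xs) auto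

lemma sum_list_insort: "sum_list (insort (x::nat) xs) = x + sum_list xs"
  by (induction xs) auto

lemma sum_list_remove1': "(x::nat) \<in> set xs \<Longrightarrow> sum_list xs = x + sum_list (remove1 x xs)"
  by (induction xs) auto

lemma finite_useqs: "finite (unimodal_seqs n)"
proof -
  let ?L = "{xs. set xs \<subseteq> {..n} \<and> length xs \<le> n}"
  have "unimodal_seqs n \<subseteq> ?L \<times> {..n} \<times> ?L"
  proof
    fix x assume "x \<in> unimodal_seqs n"
    then obtain as c bs where x: "x = (as, c, bs)" and s: "sorted as" "sorted bs"
      "\<forall>x\<in>set as. 0 < x \<and> x \<le> c" "\<forall>x\<in>set bs. 0 < x \<and> x \<le> c"
      "sum_list as + c + sum_list bs = n"
      unfolding unimodal_seqs_def by auto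
    have "length as \<le> sum_list as" "length bs \<le> sum_list bs"
      using len_le_sum s by auto
    moreover have "set as \<subseteq> {..n}" "set bs \<subseteq> {..n}"
      using member_le_sum_list[of _ as] member_le_sum_list[of _ bs] s(5) by fastforce+
    ultimately show "x \<in> ?L \<times> {..n} \<times> ?L" using x s(5) by auto
  qed
  moreover have "finite (?L \<times> {..n} \<times> ?L)"
    by (intro finite_cartesian_product finite_lists_length_le) auto
  ultimately show ?thesis by (rule finite_subset)
qed

lemma card_split: "finite A \<Longrightarrow> card A = card {x\<in>A. P x} + card {x\<in>A. \<not> P x}"
proof -
  assume "finite A"
  have "A = {x\<in>A. P x} \<union> {x\<in>A. \<not> P x}" by auto
  then have "card A = card ({x\<in>A. P x} \<union> {x\<in>A. \<not> P x})" by simp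
  also have "\<dots> = card {x\<in>A. P x} + card {x\<in>A. \<not> P x}"
    by (rule card_Un_disjoint) (use \<open>finite A\<close> in auto)
  finally show ?thesis .
qed

definition big :: "nat \<Rightarrow> nat list \<times> nat \<times> nat list \<Rightarrow> bool" where
  "big j x = (j \<le> fst (snd x))"
definition ja :: "nat \<Rightarrow> nat list \<times> nat \<times> nat list \<Rightarrow> bool" where
  "ja j x = (j \<in> set (fst x))"
definition jb :: "nat \<Rightarrow> nat list \<times> nat \<times> nat list \<Rightarrow> bool" where
  "jb j x = (j \<in> set (snd (snd x)))"

lemma bij1:
  assumes "j \<le> m" "1 \<le> j"
  shows "card {x\<in>unimodal_seqs m. big j x \<and> ja j x} = card {x\<in>unimodal_seqs (m-j). big j x}"
proof -
  have "bij_betw (\<lambda>(as,c,bs). (insort j as, c, bs)) {x\<in>unimodal_seqs (m-j). big j x}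
     {x\<in>unimodal_seqs m. big j x \<and> ja j x}"
  proof (rule bij_betw_byWitness[where f'="\<lambda>(as,c,bs). (remove1 j as, c, bs)"])
    show "\<forall>a\<in>{x \<in> unimodal_seqs (m - j). big j x}.
       (case case a of (as, c, bs) \<Rightarrow> (insort j as, c, bs) of (as, c, bs) \<Rightarrow> (remove1 j as, c, bs)) = a"
      by auto
    show "\<forall>a'\<in>{x \<in> unimodal_seqs m. big j x \<and> ja j x}.
       (case case a' of (as, c, bs) \<Rightarrow> (remove1 j as, c, bs) of (as, c, bs) \<Rightarrow> (insort j as, c, bs)) = a'"
      by (auto simp: unimodal_seqs_def ja_def insort_remove1)
    show "(\<lambda>(as, c, bs). (insort j as, c, bs)) ` {x \<in> unimodal_seqs (m - j). big j x}
       \<subseteq> {x \<in> unimodal_seqs m. big j x \<and> ja j x}"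
      using assms by (auto simp: unimodal_seqs_def ja_def big_def sorted_insort set_insort_key sum_list_insort)
    show "(\<lambda>(as, c, bs). (remove1 j as, c, bs)) ` {x \<in> unimodal_seqs m. big j x \<and> ja j x}
       \<subseteq> {x \<in> unimodal_seqs (m - j). big j x}"
    proof (clarsimp simp: unimodal_seqs_def ja_def big_def)
      fix as c bs assume "sorted as" "j \<in> set as" "\<forall>x\<in>set as. 0 < x \<and> x \<le> c"
      then show "sorted (remove1 j as) \<and> (\<forall>x\<in>set (remove1 j as). 0 < x \<and> x \<le> c) \<and>
         sum_list (remove1 j as) + c + sum_list bs = sum_list as + c + sum_list bs - j"
        using sum_list_remove1'[of j as] sorted_remove1 notin_set_remove1 by fastforce
    qed
  qed
  then show ?thesis by (simp add: bij_betw_same_card)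
qed

lemma bij2:
  assumes "j \<le> m" "1 \<le> j"
  shows "card {x\<in>unimodal_seqs m. big j x \<and> \<not> ja j x \<and> jb j x}
       = card {x\<in>unimodal_seqs (m-j). big j x \<and> \<not> ja j x}"
proof -
  have "bij_betw (\<lambda>(as,c,bs). (as, c, insort j bs)) {x\<in>unimodal_seqs (m-j). big j x \<and> \<not> ja j x}
     {x\<in>unimodal_seqs m. big j x \<and> \<not> ja j x \<and> jb j x}"
  proof (rule bij_betw_byWitness[where f'="\<lambda>(as,c,bs). (as, c, remove1 j bs)"])
    show "\<forall>a\<in>{x \<in> unimodal_seqs (m - j). big j x \<and> \<not> ja j x}.
       (case case a of (as, c, bs) \<Rightarrow> (as, c, insort j bs) of (as, c, bs) \<Rightarrow> (as, c, remove1 j bs)) = a"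
      by auto
    show "\<forall>a'\<in>{x \<in> unimodal_seqs m. big j x \<and> \<not> ja j x \<and> jb j x}.
       (case case a' of (as, c, bs) \<Rightarrow> (as, c, remove1 j bs) of (as, c, bs) \<Rightarrow> (as, c, insort j bs)) = a'"
      by (auto simp: unimodal_seqs_def jb_def insort_remove1)
    show "(\<lambda>(as, c, bs). (as, c, insort j bs)) ` {x \<in> unimodal_seqs (m - j). big j x \<and> \<not> ja j x}
       \<subseteq> {x \<in> unimodal_seqs m. big j x \<and> \<not> ja j x \<and> jb j x}"
      using assms by (auto simp: unimodal_seqs_def ja_def jb_def big_def sorted_insort set_insort_key sum_list_insort)
    show "(\<lambda>(as, c, bs). (as, c, remove1 j bs)) ` {x \<in> unimodal_seqs m. big j x \<and> \<not> ja j x \<and> jb j x}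
       \<subseteq> {x \<in> unimodal_seqs (m - j). big j x \<and> \<not> ja j x}"
    proof (clarsimp simp: unimodal_seqs_def ja_def jb_def big_def)
      fix as c bs assume "sorted bs" "j \<in> set bs" "\<forall>x\<in>set bs. 0 < x \<and> x \<le> c"
      then show "sorted (remove1 j bs) \<and> (\<forall>x\<in>set (remove1 j bs). 0 < x \<and> x \<le> c) \<and>
         sum_list as + c + sum_list (remove1 j bs) = sum_list as + c + sum_list bs - j"
        using sum_list_remove1'[of j bs] sorted_remove1 notin_set_remove1 by fastforce
    qed
  qed
  then show ?thesis by (simp add: bij_betw_same_card)
qed


lemma card_split2: "finite A \<Longrightarrow> card {x\<in>A. P x} = card {x\<in>A. P x \<and> Q x} + card {x\<in>A. P x \<and> \<not> Q x}"
proof -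
  assume "finite A"
  then have "card {x\<in>A. P x} = card {x\<in>{x\<in>A. P x}. Q x} + card {x\<in>{x\<in>A. P x}. \<not> Q x}"
    by (intro card_split) auto
  moreover have "{x\<in>{x\<in>A. P x}. Q x} = {x\<in>A. P x \<and> Q x}" "{x\<in>{x\<in>A. P x}. \<not> Q x} = {x\<in>A. P x \<and> \<not> Q x}"
    by auto
  ultimately show ?thesis by simp
qed

lemma peak_pos: "(as, c, bs) \<in> unimodal_seqs m \<Longrightarrow> 0 < m \<Longrightarrow> 0 < c"
proof (rule ccontr)
  assume a: "(as, c, bs) \<in> unimodal_seqs m" "0 < m" "\<not> 0 < c"
  then have "as = []" "bs = []" unfolding unimodal_seqs_def
    by (metis (no_types, lifting) case_prodD last_in_set le_zero_eq mem_Collect_eq not_gr_zero)+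
  then show False using a unfolding unimodal_seqs_def by auto
qed

lemma small1:
  assumes "j < n"
  shows "card {x\<in>unimodal_seqs (n-j). \<not> big j x} \<le> card {x\<in>unimodal_seqs n. \<not> big j x}"
proof (rule card_inj_on_le[where f="\<lambda>(as,c,bs). (replicate j 1 @ as, c, bs)"])
  show "inj_on (\<lambda>(as, c, bs). (replicate j 1 @ as, c, bs)) {x \<in> unimodal_seqs (n - j). \<not> big j x}"
    by (auto simp: inj_on_def)
  show "finite {x \<in> unimodal_seqs n. \<not> big j x}" using finite_useqs by auto
  show "(\<lambda>(as, c, bs). (replicate j 1 @ as, c, bs)) ` {x \<in> unimodal_seqs (n - j). \<not> big j x}
    \<subseteq> {x \<in> unimodal_seqs n. \<not> big j x}"
  proof clarify
    fix as c bs assume a: "(as, c, bs) \<in> unimodal_seqs (n - j)" "\<not> big j (as, c, bs)"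
    then have "0 < c" using peak_pos assms by auto
    moreover have "sum_list (replicate j (1::nat)) = j" by (simp add: sum_list_replicate)
    ultimately show "(replicate j 1 @ as, c, bs) \<in> unimodal_seqs n \<and> \<not> big j (replicate j 1 @ as, c, bs)"
      using a assms by (auto simp: unimodal_seqs_def big_def sorted_append)
  qed
qed

lemma small2:
  assumes "2 * j \<le> n" "1 \<le> j"
  shows "card {x\<in>unimodal_seqs (n-j). \<not> big j x} < card {x\<in>unimodal_seqs n. big j x \<and> \<not> ja j x \<and> \<not> jb j x}"
proof -
  let ?B = "{x\<in>unimodal_seqs n. big j x \<and> \<not> ja j x \<and> \<not> jb j x}"
  have fB: "finite ?B" using finite_useqs by auto
  have inB: "([], n, []) \<in> ?B" using assms by (auto simp: unimodal_seqs_def big_def ja_def jb_def)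
  have "card {x\<in>unimodal_seqs (n-j). \<not> big j x} \<le> card (?B - {([], n, [])})"
  proof (rule card_inj_on_le[where f="\<lambda>(as,c,bs). (as, c + j, bs)"])
    show "inj_on (\<lambda>(as, c, bs). (as, c + j, bs)) {x \<in> unimodal_seqs (n - j). \<not> big j x}"
      by (auto simp: inj_on_def)
    show "finite (?B - {([], n, [])})" using fB by auto
    show "(\<lambda>(as, c, bs). (as, c + j, bs)) ` {x \<in> unimodal_seqs (n - j). \<not> big j x} \<subseteq> ?B - {([], n, [])}"
      using assms by (fastforce simp: unimodal_seqs_def big_def ja_def jb_def)
  qed
  also have "\<dots> < card ?B"
  proof -
    have "card ?B > 0" using fB inB card_gt_0_iff by blast
    then show ?thesis using fB inB by simp
  qed
  finally show ?thesis .
qed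

theorem theorem1p3:
  fixes j :: nat
  assumes "j \<ge> 1"
  shows "\<exists>N::nat. \<forall>n\<ge>N. int (u n) - 2 * int (u (n - j)) + int (u (n - 2 * j)) > 0"
proof (intro exI allI impI)
  fix n assume n: "2 * j + 1 \<le> n"
  define S where "S = unimodal_seqs"
  have f: "\<And>m. finite (S m)" unfolding S_def by (rule finite_useqs)
  define Sb where "Sb m = card {x\<in>S m. big j x}" for m
  define Ss where "Ss m = card {x\<in>S m. \<not> big j x}" for m
  define Ba where "Ba m = card {x\<in>S m. big j x \<and> ja j x}" for m
  define Bna where "Bna m = card {x\<in>S m. big j x \<and> \<not> ja j x}" for m
  define Bnab where "Bnab m = card {x\<in>S m. big j x \<and> \<not> ja j x \<and> jb j x}" for m
  define B00 where "B00 m = card {x\<in>S m. big j x \<and> \<not> ja j x \<and> \<not> jb j x}" for m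
  have u: "\<And>m. u m = Sb m + Ss m" unfolding u_def Sb_def Ss_def S_def
    using card_split finite_useqs by blast
  have e1: "\<And>m. Sb m = Ba m + Bna m" unfolding Sb_def Ba_def Bna_def using card_split2[OF f] by blast
  have e2: "Bna m = Bnab m + B00 m" for m unfolding Bna_def Bnab_def B00_def
    using card_split2[OF f, of m "\<lambda>x. big j x \<and> \<not> ja j x" "jb j"] by (simp add: conj_assoc)
  have e3: "Ba n = Sb (n - j)" unfolding Ba_def Sb_def S_def using bij1[of j n] assms n by simp
  have e4: "Ba (n - j) = Sb (n - 2 * j)" unfolding Ba_def Sb_def S_def using bij1[of j "n - j"] assms n
    by (simp add: diff_diff_add mult_2)
  have e5: "Bnab n = Bna (n - j)" unfolding Bnab_def Bna_def S_def using bij2[of j n] assms n by simp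
  have s1: "Ss (n - j) \<le> Ss n" unfolding Ss_def S_def using small1[of j n] assms n by simp
  have s2: "Ss (n - j) < B00 n" unfolding Ss_def B00_def S_def using small2[of j n] assms n by simp
  show "int (u n) - 2 * int (u (n - j)) + int (u (n - 2 * j)) > 0"
    using u[of n] u[of "n - j"] u[of "n - 2 * j"] e1[of n] e1[of "n - j"] e2[of n] e3 e4 e5 s1 s2
    by linarith
qed

end
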